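(* Let $R$ be a ring with identity and involution $*$, and let $a,b\in R$ with $a$ group invertible. The following are equivalent: (1) $a$ is core invertible with core inverse $b$; (2) $aba=a$, $ab^2=b$, $(ab)^*=ab$; (3) $bab=b$, $ba^2=a$, $(ab)^*=ab$.
   Context: An involution on $R$ satisfies $(a^* )^*=a$, $(ab)^*=b^*a^*$, $(a+b)^*=a^*+b^*$. An element $x\in R$ is a core inverse of $a$ if $axa=a$, $xR=aR$ and $Rx=Ra^*$; it is unique when it exists. $a$ is group invertible if there is $c\in R$ with $aca=a$, $cac=c$, $ac=ca$. *)

theory Defs
  imports Main
begin

definition involution :: "('a::ring_1 \<Rightarrow> 'a) \<Rightarrow> bool" where
  "involution s \<longleftrightarrow> (\<forall>a. s (s a) = a) \<and> (\<forall>a b. s (a * b) = s b * s a)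
     \<and> (\<forall>a b. s (a + b) = s a + s b)"

definition rprinc :: "'a::ring_1 \<Rightarrow> 'a set" where
  "rprinc x = {x * r | r. True}"

definition lprinc :: "'a::ring_1 \<Rightarrow> 'a set" where
  "lprinc x = {r * x | r. True}"

definition is_core_inverse :: "('a::ring_1 \<Rightarrow> 'a) \<Rightarrow> 'a \<Rightarrow> 'a \<Rightarrow> bool" where
  "is_core_inverse s a x \<longleftrightarrow> a * x * a = a \<and> rprinc x = rprinc a \<and> lprinc x = lprinc (s a)"

definition group_invertible :: "'a::ring_1 \<Rightarrow> bool" where
  "group_invertible a \<longleftrightarrow> (\<exists>c. a * c * a = a \<and> c * a * c = c \<and> a * c = c * a)"

end

theory Submission
  imports Defs
begin

theorem corollary3p7:
  fixes s :: "'a::ring_1 \<Rightarrow> 'a" and a b :: 'a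
  assumes "involution s"
    and "group_invertible a"
  shows "(is_core_inverse s a b
          \<longleftrightarrow> (a * b * a = a \<and> a * b ^ 2 = b \<and> s (a * b) = a * b))
       \<and> ((a * b * a = a \<and> a * b ^ 2 = b \<and> s (a * b) = a * b)
          \<longleftrightarrow> (b * a * b = b \<and> b * a ^ 2 = a \<and> s (a * b) = a * b))"
proof -
  have ss: "\<And>x. s (s x) = x" and sm: "\<And>x y. s (x * y) = s y * s x"
    using assms(1) unfolding involution_def by auto
  obtain c where c1: "a * c * a = a" and c2: "c * a * c = c" and c3: "a * c = c * a"
    using assms(2) unfolding group_invertible_def by auto
  have caa: "c * a * a = a" using c1 c3 by (metis mult.assoc)
  have aac: "a * a * c = a" using c1 c3 by (metis mult.assoc)
  have P2: "a * b * a = a \<and> a * b ^ 2 = b \<and> s (a * b) = a * b"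
    if h: "is_core_inverse s a b"
  proof -
    from h have h1: "a * b * a = a" and h2: "rprinc b = rprinc a" and h3: "lprinc b = lprinc (s a)"
      unfolding is_core_inverse_def by auto
    have "b \<in> rprinc b" unfolding rprinc_def by (rule CollectI, rule exI[of _ 1], simp)
    with h2 have "b \<in> rprinc a" by simp
    then obtain r where r: "b = a * r" unfolding rprinc_def by auto
    have "b \<in> lprinc b" unfolding lprinc_def by (rule CollectI, rule exI[of _ 1], simp)
    with h3 have "b \<in> lprinc (s a)" by simp
    then obtain t where t: "b = t * s a" unfolding lprinc_def by auto
    have sa: "s a = s a * s b * s a" using h1 sm by (metis mult.assoc)
    have "b = t * s a * s b * s a" using t sa by (simp add: mult.assoc)
    also have "\<dots> = b * s (a * b)" using t sm by (simp add: mult.assoc)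
    finally have bb: "b = b * s (a * b)" .
    have ab: "a * b = a * b * s (a * b)" using bb by (metis mult.assoc)
    have "s (a * b) = s (a * b * s (a * b))" using ab by simp
    also have "\<dots> = a * b * s (a * b)" using sm ss by (simp add: mult.assoc)
    finally have sab: "s (a * b) = a * b" using ab by simp
    have "a * b ^ 2 = a * b * a * r" using r by (simp add: power2_eq_square mult.assoc)
    also have "\<dots> = b" using h1 r by simp
    finally show ?thesis using h1 sab by simp
  qed
  have Q: "b * a * b = b \<and> b * a ^ 2 = a"
    if h1: "a * b * a = a" and h2: "a * b ^ 2 = b"
  proof -
    have "c * a * b = c * a * (a * b * b)" using h2 by (simp add: power2_eq_square mult.assoc)
    also have "\<dots> = (c * a * a) * b * b" by (simp add: mult.assoc)
    also have "\<dots> = b" using caa h2 by (simp add: power2_eq_square mult.assoc)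
    finally have b: "b = c * a * b" by simp
    have "b * a * b = c * (a * b * a) * b" using b by (metis mult.assoc)
    then have bab: "b * a * b = b" using h1 b by simp
    have "b * a ^ 2 = c * (a * b * a) * a" using b by (simp add: power2_eq_square mult.assoc)
      (metis mult.assoc)
    then have "b * a ^ 2 = a" using h1 caa by simp
    with bab show ?thesis by simp
  qed
  have P1: "is_core_inverse s a b"
    if h1: "a * b * a = a" and h2: "a * b ^ 2 = b" and h3: "s (a * b) = a * b"
  proof -
    from Q[OF h1 h2] have bab: "b * a * b = b" and baa: "b * a ^ 2 = a" by auto
    have "rprinc b = rprinc a"
    proof
      show "rprinc b \<subseteq> rprinc a" unfolding rprinc_def
      proof clarify
        fix r show "\<exists>r'. b * r = a * r' \<and> True"
          using h2 by (rule_tac x="b * b * r" in exI) (metis power2_eq_square mult.assoc)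
      qed
      show "rprinc a \<subseteq> rprinc b" unfolding rprinc_def
      proof clarify
        fix r show "\<exists>r'. a * r = b * r' \<and> True"
          using baa by (rule_tac x="a * a * r" in exI) (metis power2_eq_square mult.assoc)
      qed
    qed
    moreover have "lprinc b = lprinc (s a)"
    proof
      have e1: "b = b * s b * s a" using bab h3 sm by (metis mult.assoc)
      show "lprinc b \<subseteq> lprinc (s a)" unfolding lprinc_def
      proof clarify
        fix r show "\<exists>r'. r * b = r' * s a \<and> True"
          using e1 by (rule_tac x="r * b * s b" in exI) (metis mult.assoc)
      qed
      have e2: "s a = s a * a * b"
      proof -
        have "s a = s (a * b * a)" using h1 by simp
        also have "\<dots> = s a * s (a * b)" using sm by simp
        finally show ?thesis using h3 by (simp add: mult.assoc)
      qed
      show "lprinc (s a) \<subseteq> lprinc b" unfolding lprinc_def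
      proof clarify
        fix r show "\<exists>r'. r * s a = r' * b \<and> True"
          using e2 by (rule_tac x="r * s a * a" in exI) (metis mult.assoc)
      qed
    qed
    ultimately show ?thesis using h1 unfolding is_core_inverse_def by simp
  qed
  have R: "a * b * a = a \<and> a * b ^ 2 = b"
    if h1: "b * a * b = b" and h2: "b * a ^ 2 = a"
  proof -
    have "b * a = b * (a * a * c)" using aac by simp
    also have "\<dots> = (b * a ^ 2) * c" by (simp add: power2_eq_square mult.assoc)
    finally have ba: "b * a = a * c" using h2 by simp
    have aba: "a * b * a = a" using ba aac by (metis mult.assoc)
    have "b = a * (c * b)" using h1 ba c3 by (metis mult.assoc)
    then have "a * b ^ 2 = a * b * a * (c * b)" by (metis power2_eq_square mult.assoc)
    then have "a * b ^ 2 = a * (c * b)" using aba by simp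
    with \<open>b = a * (c * b)\<close> aba show ?thesis by simp
  qed
  show ?thesis using P1 P2 Q R by blast
qed

end
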